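(* In $\mathbb R^2$ with coordinates $(a,b)$, let $T=1$, $U=[-1,1]$, $f\equiv0$, $v_u(a,b)=(u,-au)$, $\ell(a,b)=b$, and $\vartheta=\delta_0\otimes\eta$ with $\eta$ a probability measure on $\mathbb R$ with finite first moment. Let $I[u]=\int\ell\,d\mu_1[u]$. Then: (i) the constant control $\bar u\equiv0$ satisfies the maximum condition of the Pontryagin Maximum Principle, with dual state $\bar p_t(a,b)=-b$, and $I[\bar u]=\int b\,d\eta(b)$; (ii) the constant control $u\equiv1$ gives $\mu_t=[(a,b)\mapsto(a+t,\,b-at-t^2/2)]_\sharp\vartheta$ and $I[u]=\int b\,d\eta(b)-\tfrac12<I[\bar u]$, and $u\equiv1$ is a global minimizer of $I$ over $\mathcal U=L_\infty([0,1];[-1,1])$; (iii) every constant control $u\equiv c$ with $c\in[-1,1]\setminus\{0\}$ satisfies $I[u]<I[\bar u]$, so $\bar u$ is not optimal.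
   Context: For $u\in\mathcal U$, $\mu[u]$ is the distributional solution of $\partial_t\mu_t+\nabla\cdot(v_{u(t)}\mu_t)=0$, $\mu_0=\vartheta$, i.e. the push-forward of $\vartheta$ by the flow of $\dot a=u(t)$, $\dot b=-a\,u(t)$. The maximum condition for $\bar u$ means: for a.e. $t$, $\bar u(t)\in\arg\max_{w\in U}\int\nabla\bar p_t\cdot v_w\,d\bar\mu_t$, where $\bar p$ solves $\partial_t\bar p+\nabla\bar p\cdot v_{\bar u(t)}=0$, $\bar p_1=-\ell$. $\otimes$ denotes product measure and $\sharp$ push-forward. *)

theory Defs
  imports "HOL-Probability.Probability"
begin

definition Uset :: "real set" where
  "Uset = {-1..1}"

definition vfield :: "real \<Rightarrow> real \<times> real \<Rightarrow> real \<times> real" where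
  "vfield w x = (w, - fst x * w)"

definition ell :: "real \<times> real \<Rightarrow> real" where
  "ell x = snd x"

definition Ucontrols :: "(real \<Rightarrow> real) set" where
  "Ucontrols = {u. u \<in> borel_measurable (lebesgue_on {0..1}) \<and>
                    (AE t in lebesgue_on {0..1}. u t \<in> Uset)}"

text \<open>Flow of the (triangular) Caratheodory ODE  a' = u(t), b' = - a u(t), written in
  integral form: a(t) = a0 + int_0^t u, b(t) = b0 - int_0^t a(s) u(s) ds.\<close>
definition flow :: "(real \<Rightarrow> real) \<Rightarrow> real \<Rightarrow> real \<times> real \<Rightarrow> real \<times> real" where
  "flow u t x =
     (fst x + integral {0..t} u,
      snd x - integral {0..t} (\<lambda>s. (fst x + integral {0..s} u) * u s))"

definition theta :: "real measure \<Rightarrow> (real \<times> real) measure" where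
  "theta \<eta> = return borel 0 \<Otimes>\<^sub>M \<eta>"

definition mu :: "real measure \<Rightarrow> (real \<Rightarrow> real) \<Rightarrow> real \<Rightarrow> (real \<times> real) measure" where
  "mu \<eta> u t = distr (theta \<eta>) borel (flow u t)"

definition cost :: "real measure \<Rightarrow> (real \<Rightarrow> real) \<Rightarrow> real" where
  "cost \<eta> u = (\<integral>x. ell x \<partial>(mu \<eta> u 1))"

text \<open>p solves the transport equation  dp/dt + grad p . v_{u(t)} = 0  on [0,1] x R^2
  (classically: the space-time derivative applied to (1, v_{u(t)}(x)) vanishes).\<close>
definition transport_sol :: "(real \<Rightarrow> real) \<Rightarrow> (real \<Rightarrow> real \<times> real \<Rightarrow> real) \<Rightarrow> bool" where
  "transport_sol u p \<longleftrightarrow>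
     (\<forall>t\<in>{0..1}. \<forall>x. \<exists>D. ((\<lambda>(s,y). p s y) has_derivative D) (at (t,x)) \<and>
                          D (1, vfield (u t) x) = 0)"

definition max_condition :: "real measure \<Rightarrow> (real \<Rightarrow> real) \<Rightarrow> (real \<Rightarrow> real \<times> real \<Rightarrow> real) \<Rightarrow> bool" where
  "max_condition \<eta> ubar p \<longleftrightarrow>
     (AE t in lebesgue_on {0..1}.
        ubar t \<in> Uset \<and>
        (\<forall>w\<in>Uset. (\<integral>x. frechet_derivative (p t) (at x) (vfield w x) \<partial>(mu \<eta> ubar t))
                  \<le> (\<integral>x. frechet_derivative (p t) (at x) (vfield (ubar t) x) \<partial>(mu \<eta> ubar t))))"

end

theory Submission
  imports Defs
begin

lemma theta_eq:
  assumes P: "prob_space \<eta>" and S: "sets \<eta> = sets borel"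
  shows "theta \<eta> = distr \<eta> borel (\<lambda>b. (0::real, b))"
proof -
  interpret prob_space \<eta> by fact
  have meas: "(\<lambda>b. (0::real, b)) \<in> measurable \<eta> borel"
  proof -
    have "(\<lambda>b. (0::real, b)) \<in> borel \<rightarrow>\<^sub>M borel"
      by (intro borel_measurable_continuous_onI continuous_intros)
    then show ?thesis using measurable_cong_sets[OF S refl, of "borel :: (real \<times> real) measure"] by simp
  qed
  have sp: "space \<eta> = UNIV" using sets_eq_imp_space_eq[OF S] by simp
  show ?thesis unfolding theta_def
  proof (rule pair_measure_eqI)
    show "sigma_finite_measure (return borel (0::real))"
      by (simp add: prob_space_imp_sigma_finite prob_space_return)
    show "sigma_finite_measure \<eta>" by (simp add: P prob_space_imp_sigma_finite)
    have "sets (return borel (0::real) \<Otimes>\<^sub>M \<eta>) = sets ((borel::real measure) \<Otimes>\<^sub>M (borel::real measure))"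
      by (rule sets_pair_measure_cong) (simp_all add: S)
    also have "\<dots> = sets (borel :: (real \<times> real) measure)"
      by (simp only: borel_prod)
    also have "\<dots> = sets (distr \<eta> borel (\<lambda>b. (0::real, b)))" by simp
    finally show "sets (return borel (0::real) \<Otimes>\<^sub>M \<eta>) = sets (distr \<eta> borel (\<lambda>b. (0::real, b)))" .
    fix A B assume A: "A \<in> sets (return borel (0::real))" and B: "B \<in> sets \<eta>"
    have AB: "A \<times> B \<in> sets (borel :: (real \<times> real) measure)"
      using A B S by (simp add: borel_prod[symmetric])
    have "emeasure (distr \<eta> borel (\<lambda>b. (0::real, b))) (A \<times> B) = emeasure \<eta> ((\<lambda>b. (0::real, b)) -` (A \<times> B) \<inter> space \<eta>)"
      by (rule emeasure_distr[OF meas AB])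
    also have "(\<lambda>b. (0::real, b)) -` (A \<times> B) \<inter> space \<eta> = (if 0 \<in> A then B else {})"
      using sp by auto
    finally show "emeasure (return borel 0) A * emeasure \<eta> B = emeasure (distr \<eta> borel (\<lambda>b. (0::real, b))) (A \<times> B)"
      using A by (simp add: emeasure_return)
  qed
qed

lemma has_int_lin:
  fixes t p q :: real assumes t: "t \<ge> 0"
  shows "((\<lambda>s. p + q * s) has_integral (p * t + q * t^2/2)) {0..t}"
proof -
  have "((\<lambda>s. p + q * s) has_integral ((\<lambda>s. p * s + q * s^2/2) t - (\<lambda>s. p * s + q * s^2/2) 0)) {0..t}"
    apply (rule fundamental_theorem_of_calculus[OF t])
    apply (auto intro!: derivative_eq_intros simp: has_real_derivative_iff_has_vector_derivative[symmetric])
    done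
  then show ?thesis by simp
qed

lemma flow_bounded:
  assumes v: "v \<in> borel_measurable (lebesgue_on {0..1})"
    and b: "\<And>s. s \<in> {0..1} \<Longrightarrow> \<bar>v s\<bar> \<le> 1"
  shows "\<exists>K. K \<le> 1/2 \<and> flow v 1 = (\<lambda>x. (fst x + integral {0..1} v, snd x - (fst x * integral {0..1} v + K)))"
proof -
  have vi: "v integrable_on {0..1}"
    by (rule measurable_bounded_by_integrable_imp_integrable_real[OF v _ b]) auto
  define A where "A s = integral {0..s} v" for s
  have Ac: "continuous_on {0..1} A" unfolding A_def by (rule indefinite_integral_continuous_1[OF vi])
  have Ab: "\<bar>A s\<bar> \<le> s" if s: "s \<in> {0..1}" for s
  proof -
    have "norm (integral {0..s} v) \<le> integral {0..s} (\<lambda>_. 1::real)"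
      apply (rule integral_norm_bound_integral)
      using integrable_subinterval_real[OF vi, of 0 s] s b by auto
    then show ?thesis using s by (simp add: A_def)
  qed
  have Am: "A \<in> borel_measurable (lebesgue_on {0..1})"
    by (rule continuous_imp_measurable_on_sets_lebesgue[OF Ac]) simp
  have Avm: "(\<lambda>s. A s * v s) \<in> borel_measurable (lebesgue_on {0..1})"
    using Am v by (rule borel_measurable_times)
  have Avb: "\<bar>A s * v s\<bar> \<le> s" if s: "s \<in> {0..1}" for s
  proof -
    have "\<bar>A s * v s\<bar> = \<bar>A s\<bar> * \<bar>v s\<bar>" by (simp add: abs_mult)
    also have "\<dots> \<le> s * 1" using Ab[OF s] b[OF s] by (intro mult_mono) auto
    finally show ?thesis by simp
  qed
  have idint: "((\<lambda>s. s) has_integral 1/2) {0..1::real}"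
    using has_int_lin[of 1 0 1] by simp
  have Avi: "(\<lambda>s. A s * v s) integrable_on {0..1}"
    apply (rule measurable_bounded_by_integrable_imp_integrable_real[OF Avm _ Avb])
    using idint by auto
  define K where "K = integral {0..1} (\<lambda>s. A s * v s)"
  have "norm K \<le> integral {0..1} (\<lambda>s. s::real)"
    unfolding K_def apply (rule integral_norm_bound_integral[OF Avi])
    using idint Avb by auto
  then have K: "K \<le> 1/2" using idint integral_unique by fastforce
  have "integral {0..1} (\<lambda>s. (a + A s) * v s) = a * integral {0..1} v + K" for a
  proof -
    have "integral {0..1} (\<lambda>s. (a + A s) * v s) = integral {0..1} (\<lambda>s. a * v s + A s * v s)"
      by (simp add: distrib_right)
    also have "\<dots> = integral {0..1} (\<lambda>s. a * v s) + integral {0..1} (\<lambda>s. A s * v s)"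
      by (rule integral_add) (auto intro: vi Avi integrable_on_mult_right)
    finally show ?thesis by (simp add: K_def)
  qed
  then have "flow v 1 = (\<lambda>x. (fst x + integral {0..1} v, snd x - (fst x * integral {0..1} v + K)))"
    by (simp add: flow_def A_def fun_eq_iff)
  with K show ?thesis by blast
qed

lemma flow_Ucontrols:
  assumes u: "u \<in> Ucontrols"
  shows "\<exists>C K. K \<le> 1/2 \<and> flow u 1 = (\<lambda>x. (fst x + C, snd x - (fst x * C + K)))"
proof -
  define v where "v s = max (-1) (min 1 (u s))" for s
  have um: "u \<in> borel_measurable (lebesgue_on {0..1})" and ae: "AE t in lebesgue_on {0..1}. u t \<in> Uset"
    using u by (auto simp: Ucontrols_def)
  have vm: "v \<in> borel_measurable (lebesgue_on {0..1})"
    unfolding v_def by (intro borel_measurable_max borel_measurable_min borel_measurable_const um)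
  have vb: "\<bar>v s\<bar> \<le> 1" for s by (simp add: v_def)
  obtain N where N: "{x\<in>space (lebesgue_on {0..1}). \<not> u x \<in> Uset} \<subseteq> N"
      "emeasure (lebesgue_on {0..1}) N = 0" "N \<in> sets (lebesgue_on {0..1})"
    using ae by (rule AE_E)
  have "N \<in> null_sets (lebesgue_on {0..1})" using N(2,3) by (simp add: null_sets_def)
  then have "N \<in> null_sets lebesgue" by (simp add: null_sets_restrict_space)
  then have negN: "negligible N" by (simp add: negligible_iff_null_sets)
  have uv: "u s = v s" if "s \<in> {0..1} - N" for s
    using that N(1) by (auto simp: v_def Uset_def)
  have iuv: "integral {0..t} u = integral {0..t} v" if "t \<le> 1" for t
    by (rule integral_spike[OF negN]) (use that uv in auto)
  have "flow u 1 = flow v 1"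
    unfolding flow_def fun_eq_iff
  proof (intro allI)
    fix x :: "real \<times> real"
    have "integral {0..1} (\<lambda>s. (fst x + integral {0..s} u) * u s) = integral {0..1} (\<lambda>s. (fst x + integral {0..s} v) * v s)"
      by (rule integral_spike[OF negN]) (use uv iuv in auto)
    then show "(fst x + integral {0..1} u, snd x - integral {0..1} (\<lambda>s. (fst x + integral {0..s} u) * u s)) =
      (fst x + integral {0..1} v, snd x - integral {0..1} (\<lambda>s. (fst x + integral {0..s} v) * v s))"
      using iuv[of 1] by simp
  qed
  then show ?thesis using flow_bounded[OF vm vb] by metis
qed

lemma cost_formula:
  assumes P: "prob_space \<eta>" and S: "sets \<eta> = sets borel" and I: "integrable \<eta> (\<lambda>b. b)"
    and F: "flow u 1 = (\<lambda>x. (fst x + C, snd x - (fst x * C + K)))"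
  shows "cost \<eta> u = (\<integral>b. b \<partial>\<eta>) - K"
proof -
  interpret prob_space \<eta> by fact
  have m1: "(\<lambda>b. (0::real, b)) \<in> \<eta> \<rightarrow>\<^sub>M borel"
  proof -
    have "(\<lambda>b. (0::real, b)) \<in> borel \<rightarrow>\<^sub>M borel"
      by (intro borel_measurable_continuous_onI continuous_intros)
    then show ?thesis using measurable_cong_sets[OF S refl, of "borel :: (real \<times> real) measure"] by simp
  qed
  have m2: "flow u 1 \<in> borel \<rightarrow>\<^sub>M borel" unfolding F
    by (intro borel_measurable_continuous_onI continuous_intros)
  have "cost \<eta> u = (\<integral>x. snd x \<partial>(distr \<eta> borel (\<lambda>b. flow u 1 (0, b))))"
    unfolding cost_def mu_def theta_eq[OF P S] ell_def
    by (subst distr_distr[OF m2 m1]) (simp add: comp_def)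
  also have "\<dots> = (\<integral>b. snd (flow u 1 (0, b)) \<partial>\<eta>)"
  proof (rule integral_distr)
    have "(\<lambda>b. flow u 1 (0, b)) = flow u 1 \<circ> (\<lambda>b. (0::real, b))" by (simp add: comp_def)
    then show "(\<lambda>b. flow u 1 (0, b)) \<in> \<eta> \<rightarrow>\<^sub>M borel" using measurable_comp[OF m1 m2] by simp
    show "snd \<in> borel_measurable (borel::(real\<times>real) measure)"
      unfolding borel_prod[where 'a=real and 'b=real, symmetric] by (rule measurable_snd)
  qed
  also have "\<dots> = (\<integral>b. b - K \<partial>\<eta>)" by (simp add: F)
  also have "\<dots> = (\<integral>b. b \<partial>\<eta>) - K"
    using I by (simp add: prob_space)
  finally show ?thesis .
qed

lemma flow_const:
  fixes c t :: real assumes t: "t \<ge> 0"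
  shows "flow (\<lambda>_. c) t = (\<lambda>x. (fst x + c * t, snd x - (fst x * c * t + c * c * t^2 / 2)))"
proof -
  have i1: "integral {0..s} (\<lambda>_. c) = c * s" if "s \<ge> 0" for s using that by simp
  have "integral {0..t} (\<lambda>s. (a + integral {0..s} (\<lambda>_. c)) * c) = a * c * t + c * c * t^2 / 2" for a
  proof -
    have "integral {0..t} (\<lambda>s. (a + integral {0..s} (\<lambda>_. c)) * c) = integral {0..t} (\<lambda>s. a * c + (c * c) * s)"
      by (rule integral_cong) (simp add: i1 algebra_simps)
    also have "\<dots> = a * c * t + c * c * t^2 / 2"
      using has_int_lin[OF t, of "a * c" "c * c"] by (simp add: integral_unique)
    finally show ?thesis .
  qed
  then show ?thesis using i1[OF t] by (simp add: flow_def fun_eq_iff)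
qed

lemma const_U: "c \<in> Uset \<Longrightarrow> (\<lambda>_. c) \<in> Ucontrols"
  unfolding Ucontrols_def by auto

theorem mainTheorem4:
  fixes \<eta> :: "real measure"
  assumes "prob_space \<eta>"
    and "sets \<eta> = sets borel"
    and "integrable \<eta> (\<lambda>b. b)"
  defines "ubar \<equiv> (\<lambda>t::real. 0::real)"
    and "pbar \<equiv> (\<lambda>(t::real) (x::real \<times> real). - snd x)"
  shows
    \<comment> \<open>(i)\<close>
    "(ubar \<in> Ucontrols \<and> transport_sol ubar pbar \<and> pbar 1 = (\<lambda>x. - ell x) \<and>
      max_condition \<eta> ubar pbar \<and> cost \<eta> ubar = (\<integral>b. b \<partial>\<eta>))
     \<comment> \<open>(ii)\<close>
     \<and> ((\<lambda>t. 1) \<in> Ucontrols \<and>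
        (\<forall>t\<in>{0..1}. mu \<eta> (\<lambda>t. 1) t =
            distr (theta \<eta>) borel (\<lambda>(a,b). (a + t, b - a * t - t\<^sup>2 / 2))) \<and>
        cost \<eta> (\<lambda>t. 1) = (\<integral>b. b \<partial>\<eta>) - 1/2 \<and>
        cost \<eta> (\<lambda>t. 1) < cost \<eta> ubar \<and>
        (\<forall>u\<in>Ucontrols. cost \<eta> (\<lambda>t. 1) \<le> cost \<eta> u))
     \<comment> \<open>(iii)\<close>
     \<and> (\<forall>c\<in>Uset - {0}. (\<lambda>t. c) \<in> Ucontrols \<and> cost \<eta> (\<lambda>t. c) < cost \<eta> ubar)
     \<and> \<not> (\<forall>u\<in>Ucontrols. cost \<eta> ubar \<le> cost \<eta> u)"
proof -
  note A = assms(1-3)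
  have m1: "(\<lambda>b. (0::real, b)) \<in> \<eta> \<rightarrow>\<^sub>M borel"
  proof -
    have "(\<lambda>b. (0::real, b)) \<in> borel \<rightarrow>\<^sub>M borel"
      by (intro borel_measurable_continuous_onI continuous_intros)
    then show ?thesis using measurable_cong_sets[OF assms(2) refl, of "borel :: (real \<times> real) measure"] by simp
  qed
  have costc: "cost \<eta> (\<lambda>_. c) = (\<integral>b. b \<partial>\<eta>) - c * c / 2" for c
    by (rule cost_formula[OF A, of "\<lambda>_. c" c "c * c / 2"]) (simp add: flow_const)
  have cost0: "cost \<eta> ubar = (\<integral>b. b \<partial>\<eta>)" using costc[of 0] by (simp add: ubar_def)
  have cost1: "cost \<eta> (\<lambda>_. 1) = (\<integral>b. b \<partial>\<eta>) - 1/2" using costc[of 1] by simp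
  have U0: "ubar \<in> Ucontrols" unfolding ubar_def by (rule const_U) (simp add: Uset_def)
  have U1: "(\<lambda>t. 1::real) \<in> Ucontrols" by (rule const_U) (simp add: Uset_def)
  have tr: "transport_sol ubar pbar"
    unfolding transport_sol_def
  proof (intro ballI allI exI conjI)
    fix t :: real and x :: "real \<times> real"
    have bl: "bounded_linear (\<lambda>z::real \<times> real \<times> real. - snd (snd z))"
      by (rule bounded_linear_minus[OF bounded_linear_compose[OF bounded_linear_snd bounded_linear_snd]])
    have "(\<lambda>(s, y). pbar s y) = (\<lambda>z::real \<times> real \<times> real. - snd (snd z))"
      by (auto simp: pbar_def fun_eq_iff)
    then show "((\<lambda>(s, y). pbar s y) has_derivative (\<lambda>z::real \<times> real \<times> real. - snd (snd z))) (at (t, x))"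
      using bounded_linear_imp_has_derivative[OF bl] by simp
    show "- snd (snd (1::real, vfield (ubar t) x)) = 0" by (simp add: vfield_def ubar_def)
  qed
  have fd: "frechet_derivative (pbar t) (at x) = (\<lambda>h. - snd h)" for t x
  proof -
    have "((\<lambda>x::real\<times>real. - snd x) has_derivative (\<lambda>h. - snd h)) (at x)"
      by (rule bounded_linear_imp_has_derivative[OF bounded_linear_minus[OF bounded_linear_snd]])
    then show ?thesis by (simp add: pbar_def frechet_derivative_at[symmetric])
  qed
  have mu0: "mu \<eta> ubar t = distr \<eta> borel (\<lambda>b. (0::real, b))" if "t \<ge> 0" for t
  proof -
    have "flow ubar t = (\<lambda>x. x)" using flow_const[OF that, of 0] by (simp add: ubar_def)
    then show ?thesis unfolding mu_def theta_eq[OF assms(1,2)] by (simp add: distr_id2)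
  qed
  have int0: "(\<integral>x. - snd (vfield w x) \<partial>(distr \<eta> borel (\<lambda>b. (0::real, b)))) = 0" for w
  proof -
    have "(\<integral>x. - snd (vfield w x) \<partial>(distr \<eta> borel (\<lambda>b. (0::real, b)))) = (\<integral>b. - snd (vfield w (0, b)) \<partial>\<eta>)"
    proof (rule integral_distr[OF m1])
      have "(\<lambda>x::real \<times> real. - snd (vfield w x)) = (\<lambda>x. fst x * w)" by (simp add: vfield_def fun_eq_iff)
      moreover have "(\<lambda>x::real \<times> real. fst x * w) \<in> borel_measurable borel"
        by (intro borel_measurable_continuous_onI continuous_intros)
      ultimately show "(\<lambda>x::real \<times> real. - snd (vfield w x)) \<in> borel_measurable borel" by simp
    qed
    then show ?thesis by (simp add: vfield_def)
  qed
  have mc: "max_condition \<eta> ubar pbar"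
    unfolding max_condition_def
  proof (rule eventually_mono[OF AE_space])
    fix t assume "t \<in> space (lebesgue_on {0..1::real})"
    then have t: "t \<ge> 0" by simp
    show "ubar t \<in> Uset \<and> (\<forall>w\<in>Uset. (\<integral>x. frechet_derivative (pbar t) (at x) (vfield w x) \<partial>(mu \<eta> ubar t))
                  \<le> (\<integral>x. frechet_derivative (pbar t) (at x) (vfield (ubar t) x) \<partial>(mu \<eta> ubar t)))"
      unfolding fd mu0[OF t] int0 by (simp add: ubar_def Uset_def)
  qed
  have distr1: "\<forall>t\<in>{0..1}. mu \<eta> (\<lambda>t. 1) t =
            distr (theta \<eta>) borel (\<lambda>(a,b). (a + t, b - a * t - t\<^sup>2 / 2))"
  proof
    fix t :: real assume "t \<in> {0..1}"
    then have t: "t \<ge> 0" by simp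
    have "flow (\<lambda>t. 1) t = (\<lambda>(a,b). (a + t, b - a * t - t\<^sup>2 / 2))"
      using flow_const[OF t, of 1] by (auto simp: fun_eq_iff)
    then show "mu \<eta> (\<lambda>t. 1) t = distr (theta \<eta>) borel (\<lambda>(a,b). (a + t, b - a * t - t\<^sup>2 / 2))"
      by (simp add: mu_def)
  qed
  have minim: "\<forall>u\<in>Ucontrols. cost \<eta> (\<lambda>t. 1) \<le> cost \<eta> u"
  proof
    fix u assume "u \<in> Ucontrols"
    then obtain C K where K: "K \<le> 1/2" and F: "flow u 1 = (\<lambda>x. (fst x + C, snd x - (fst x * C + K)))"
      using flow_Ucontrols by blast
    show "cost \<eta> (\<lambda>t. 1) \<le> cost \<eta> u" using cost_formula[OF A F] cost1 K by simp
  qed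
  have iii: "\<forall>c\<in>Uset - {0}. (\<lambda>t. c) \<in> Ucontrols \<and> cost \<eta> (\<lambda>t. c) < cost \<eta> ubar"
  proof
    fix c assume c: "c \<in> Uset - {0}"
    then have "c * c > 0" by (auto simp: zero_less_mult_iff linorder_neq_iff)
    then show "(\<lambda>t. c) \<in> Ucontrols \<and> cost \<eta> (\<lambda>t. c) < cost \<eta> ubar"
      using c const_U costc[of c] cost0 by auto
  qed
  have lt: "cost \<eta> (\<lambda>t. 1) < cost \<eta> ubar" using cost0 cost1 by simp
  have nopt: "\<not> (\<forall>u\<in>Ucontrols. cost \<eta> ubar \<le> cost \<eta> u)"
  proof
    assume H: "\<forall>u\<in>Ucontrols. cost \<eta> ubar \<le> cost \<eta> u"
    then have "cost \<eta> ubar \<le> cost \<eta> (\<lambda>t. 1)" using U1 by blast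
    with lt show False by simp
  qed
  have p1: "pbar 1 = (\<lambda>x. - ell x)" by (simp add: pbar_def ell_def fun_eq_iff)
  show ?thesis
    by (intro conjI U0 tr p1 mc cost0 U1 distr1 cost1 lt minim iii nopt)
qed

end
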